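(* Let $X$ be a compact metric space and let $f\colon X\to X$ be a homeomorphism which is positively $n$-expansive (for some integer $n\geq1$), transitive, and has the shadowing property. Then $X$ is finite.
   Context: Let $(X,d)$ be a metric space and $f\colon X\to X$. For $x\in X$ and $c>0$, $W^s_c(x)=\{y\in X: d(f^k(y),f^k(x))\leq c \text{ for every } k\geq 0\}$. The map $f$ is positively $n$-expansive if there exists $c>0$ such that for every $x\in X$ the set $W^s_c(x)$ contains at most $n$ distinct points. $f$ is transitive if for every pair $U,V$ of nonempty open subsets of $X$ there is $k\in\mathbb{N}$ with $f^k(U)\cap V\neq\emptyset$. A sequence $(x_k)_{k\in\mathbb{Z}}$ is a $\delta$-pseudo orbit if $d(f(x_k),x_{k+1})<\delta$ for all $k$; it is $\varepsilon$-shadowed if there is $y\in X$ with $d(f^k(y),x_k)<\varepsilon$ for all $k\in\mathbb{Z}$. $f$ has the shadowing property if for every $\varepsilon>0$ there is $\delta>0$ such that every $\delta$-pseudo orbit is $\varepsilon$-shadowed. *)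

theory Defs
  imports "HOL-Analysis.Analysis"
begin

definition zpow :: "('a \<Rightarrow> 'a) \<Rightarrow> int \<Rightarrow> 'a \<Rightarrow> 'a" where
  "zpow f k = (if 0 \<le> k then f ^^ nat k else (inv f) ^^ nat (- k))"

definition stable_set :: "('a::metric_space \<Rightarrow> 'a) \<Rightarrow> real \<Rightarrow> 'a \<Rightarrow> 'a set" where
  "stable_set f c x = {y. \<forall>k::nat. dist ((f ^^ k) y) ((f ^^ k) x) \<le> c}"

definition pos_n_expansive :: "('a::metric_space \<Rightarrow> 'a) \<Rightarrow> nat \<Rightarrow> bool" where
  "pos_n_expansive f n \<longleftrightarrow>
     (\<exists>c>0. \<forall>x. finite (stable_set f c x) \<and> card (stable_set f c x) \<le> n)"

definition transitive :: "('a::topological_space \<Rightarrow> 'a) \<Rightarrow> bool" where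
  "transitive f \<longleftrightarrow> (\<forall>U V. open U \<and> open V \<and> U \<noteq> {} \<and> V \<noteq> {} \<longrightarrow>
     (\<exists>k::nat. k \<ge> 1 \<and> (f ^^ k) ` U \<inter> V \<noteq> {}))"

definition pseudo_orbit :: "('a::metric_space \<Rightarrow> 'a) \<Rightarrow> real \<Rightarrow> (int \<Rightarrow> 'a) \<Rightarrow> bool" where
  "pseudo_orbit f \<delta> xs \<longleftrightarrow> (\<forall>k. dist (f (xs k)) (xs (k + 1)) < \<delta>)"

definition shadowed :: "('a::metric_space \<Rightarrow> 'a) \<Rightarrow> real \<Rightarrow> (int \<Rightarrow> 'a) \<Rightarrow> bool" where
  "shadowed f \<epsilon> xs \<longleftrightarrow> (\<exists>y. \<forall>k. dist (zpow f k y) (xs k) < \<epsilon>)"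

definition shadowing :: "('a::metric_space \<Rightarrow> 'a) \<Rightarrow> bool" where
  "shadowing f \<longleftrightarrow> (\<forall>\<epsilon>>0. \<exists>\<delta>>0. \<forall>xs. pseudo_orbit f \<delta> xs \<longrightarrow> shadowed f \<epsilon> xs)"

end

theory Submission
  imports Defs
begin


lemma zpow_nat: "zpow f (int m) x = (f^^m) x"
  by (simp add: zpow_def)

lemma zpow_neg: "zpow f (- int m) x = (inv f ^^ m) x"
  by (auto simp: zpow_def)

lemma zpow_step:
  assumes "surj f"
  shows "f (zpow f t x) = zpow f (t+1) x"
proof (cases "t \<ge> 0")
  case True
  then obtain m where "t = int m" by (metis nonneg_eq_int)
  then show ?thesis by (simp add: zpow_def nat_add_distrib)
next
  case False
  define m where "m = nat (-t - 1)"
  have m: "t = - int (Suc m)" using False unfolding m_def by simp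
  have "t + 1 = - int m" using m by simp
  then have "zpow f (t+1) x = (inv f ^^ m) x" by (simp add: zpow_neg)
  moreover have "zpow f t x = inv f ((inv f ^^ m) x)" using m zpow_neg[of f "Suc m" x] by simp
  ultimately show ?thesis using surj_f_inv_f[OF assms] by simp
qed

lemma funpow_inv:
  fixes f g :: "'a \<Rightarrow> 'a"
  assumes "\<And>x. g (f x) = x"
  shows "(g^^m) ((f^^m) x) = x"
proof (induction m arbitrary: x)
  case (Suc m)
  have "(g^^Suc m) ((f^^Suc m) x) = (g^^m) (g (f ((f^^m) x)))"
    by (metis comp_apply funpow.simps(2) funpow_Suc_right)
  then show ?case using Suc assms by simp
qed simp

lemma funpow_period:
  assumes "(f^^N) p = p"
  shows "(f^^(N*q)) p = p"
proof (induction q)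
  case (Suc q)
  have "(f^^(N*Suc q)) p = (f^^N) ((f^^(N*q)) p)" by (simp add: funpow_add)
  then show ?case using Suc assms by simp
qed simp

lemma continuous_funpow:
  fixes f :: "'a::topological_space \<Rightarrow> 'a"
  assumes "continuous_on UNIV f"
  shows "continuous_on UNIV (f^^i)"
proof (induction i)
  case (Suc i)
  have "continuous_on UNIV (f \<circ> f^^i)"
    by (rule continuous_on_compose[OF Suc]) (auto intro: continuous_on_subset[OF assms])
  then show ?case by simp
qed (simp add: continuous_on_id)



lemma count_lemma:
  assumes fin: "finite S" and cardS: "card S \<le> n"
    and h: "\<And>j. j \<le> n \<Longrightarrow> a j \<in> S"
  shows "\<exists>i j. i < j \<and> j \<le> n \<and> a i = a j"
proof (rule ccontr)
  assume "\<not> ?thesis"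
  then have "inj_on a {..n}" unfolding inj_on_def by (metis atMost_iff linorder_neqE_nat)
  then have "card (a ` {..n}) = n + 1" by (simp add: card_image)
  moreover have "a ` {..n} \<subseteq> S" using h by auto
  ultimately have "n+1 \<le> card S" using fin by (metis card_mono)
  with cardS show False by linarith
qed

lemma periodic_point:
  fixes f :: "'a::metric_space \<Rightarrow> 'a"
  assumes surjf: "surj f" and gf: "\<And>x. g (f x) = x"
    and c: "c > 0" and stab: "\<And>x. finite (stable_set f c x) \<and> card (stable_set f c x) \<le> n"
    and tr: "transitive f" and sh: "shadowing f"
  shows "\<exists>p N. N > 0 \<and> (f^^N) p = p"
proof -
  obtain \<delta> where d: "\<delta> > 0" and sh0: "\<forall>xs. pseudo_orbit f \<delta> xs \<longrightarrow> shadowed f (c/2) xs"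
    using sh c unfolding shadowing_def by (meson half_gt_zero)
  define x0 :: 'a where "x0 = undefined"
  have "open (ball x0 (\<delta>/2))" "ball x0 (\<delta>/2) \<noteq> {}" using d by auto
  then obtain k where k: "k \<ge> 1" "(f ^^ k) ` ball x0 (\<delta>/2) \<inter> ball x0 (\<delta>/2) \<noteq> {}"
    using tr unfolding transitive_def by blast
  then obtain z where z: "z \<in> ball x0 (\<delta>/2)" "(f^^k) z \<in> ball x0 (\<delta>/2)" by blast
  have dz: "dist ((f^^k) z) z < \<delta>"
    using z by (metis dist_commute dist_triangle_half_r mem_ball)
  define Q where "Q t = (if t < 0 then zpow f t z else (f^^(nat t mod k)) z)" for t
  have "pseudo_orbit f \<delta> Q"
    unfolding pseudo_orbit_def
  proof
    fix t :: int
    show "dist (f (Q t)) (Q (t + 1)) < \<delta>"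
    proof (cases "t < -1")
      case True
      then show ?thesis using d by (simp add: Q_def zpow_step[OF surjf])
    next
      case False
      show ?thesis
      proof (cases "t = -1")
        case True
        then have "f (Q t) = z" using zpow_step[OF surjf, of t z] by (simp add: Q_def zpow_def)
        then show ?thesis using True d by (simp add: Q_def)
      next
        case False
        with \<open>\<not> t < -1\<close> have t0: "t \<ge> 0" by simp
        then obtain m where tm: "t = int m" by (metis nonneg_eq_int)
        have Q1: "Q (t+1) = (f^^(Suc m mod k)) z" using tm by (simp add: Q_def nat_add_distrib)
        have Q0: "f (Q t) = (f^^(Suc (m mod k))) z" using tm by (simp add: Q_def)
        show ?thesis
        proof (cases "Suc (m mod k) = k")
          case True
          then show ?thesis using Q1 Q0 dz by (simp add: mod_Suc)
        next
          case False
          then show ?thesis using Q1 Q0 d by (simp add: mod_Suc)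
        qed
      qed
    qed
  qed
  then obtain y where y: "\<And>t. dist (zpow f t y) (Q t) < c/2"
    using sh0 unfolding shadowed_def by blast
  have yn: "dist ((f^^m) y) ((f^^(m mod k)) z) < c/2" for m
    using y[of "int m"] by (simp add: Q_def zpow_nat)
  define a where "a j = (f^^(j*k)) y" for j
  have "a j \<in> stable_set f c y" for j
    unfolding stable_set_def
  proof (intro CollectI allI)
    fix i
    have e1: "(f^^i) (a j) = (f^^(i + j*k)) y" by (simp add: a_def funpow_add)
    have "(i + j*k) mod k = i mod k" by simp
    then have "dist ((f^^i) (a j)) ((f^^(i mod k)) z) < c/2" using e1 yn[of "i + j*k"] by simp
    moreover have "dist ((f^^i) y) ((f^^(i mod k)) z) < c/2" by (rule yn)
    ultimately show "dist ((f^^i) (a j)) ((f^^i) y) \<le> c"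
      using dist_triangle2[of "(f^^i) (a j)" "(f^^i) y" "(f^^(i mod k)) z"] by linarith
  qed
  then obtain i j where ij: "i < j" "a i = a j"
    using count_lemma[of "stable_set f c y" n a] stab by blast
  define N where "N = (j - i) * k"
  have N0: "N > 0" using ij k by (simp add: N_def)
  have "N + i*k = j*k" using ij by (simp add: N_def diff_mult_distrib)
  then have "(f^^N) (a i) = a j" unfolding a_def by (metis comp_apply funpow_add)
  then show ?thesis using N0 ij by metis
qed

theorem theoremB:
  fixes f :: "'a::metric_space \<Rightarrow> 'a" and n :: nat
  assumes "compact (UNIV :: 'a set)"
    and "homeomorphism UNIV UNIV f g"
    and "n \<ge> 1"
    and "pos_n_expansive f n"
    and "transitive f"
    and "shadowing f"
  shows "finite (UNIV :: 'a set)"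
proof (rule ccontr)
  assume inf: "\<not> finite (UNIV :: 'a set)"
  have gf: "\<And>x. g (f x) = x" and fg: "\<And>y. f (g y) = y" and contf: "continuous_on UNIV f"
    using assms(2) by (auto simp: homeomorphism_def)
  have invfg: "inv f = g" by (rule inv_equality) (use gf fg in auto)
  have surjf: "surj f" using fg by (rule surjI)
  have step: "\<And>t x. f (zpow f t x) = zpow f (t+1) x" using zpow_step[OF surjf] by blast
  have zneg: "\<And>m x. zpow f (- int m) x = (g^^m) x" using zpow_neg invfg by metis
  obtain c where c: "c > 0" and stab: "\<And>x. finite (stable_set f c x) \<and> card (stable_set f c x) \<le> n"
    using assms(4) unfolding pos_n_expansive_def by blast
  obtain p N where N0: "N > 0" and pN: "(f^^N) p = p"
    using periodic_point[OF surjf gf c stab assms(5) assms(6)] by blast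
  have pf: "\<And>q. (f^^(N*q)) p = p" using pN by (rule funpow_period)
  have gN: "(g^^N) p = p" using funpow_inv[of g f N p, OF gf] pN by simp
  have pg: "\<And>q. (g^^(N*q)) p = p" using gN by (rule funpow_period)
  have "finite ((\<lambda>i. (g^^i) p) ` {..<N})" by simp
  then obtain q where q: "q \<notin> (\<lambda>i. (g^^i) p) ` {..<N}" using inf ex_new_if_finite by blast
  have qf: "(f^^i) q \<noteq> p" if "i < N" for i
  proof
    assume "(f^^i) q = p"
    then have "q = (g^^i) p" using funpow_inv[of g f i q, OF gf] by simp
    then show False using q that by auto
  qed
  define D where "D = (\<lambda>i. dist p ((f^^i) q)) ` {..<N}"
  have Dfin: "finite D" and Dne: "D \<noteq> {}" using N0 by (auto simp: D_def)
  have Dpos: "0 < Min D" using Min_gr_iff[OF Dfin Dne] qf by (auto simp: D_def)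
  define \<beta> where "\<beta> = Min D / 3"
  have \<beta>0: "\<beta> > 0" using Dpos by (simp add: \<beta>_def)
  have qU: "2*\<beta> < dist p ((f^^i) q)" if "i < N" for i
  proof -
    have "Min D \<le> dist p ((f^^i) q)" using Min_le[OF Dfin] that by (auto simp: D_def)
    then show ?thesis using Dpos by (simp add: \<beta>_def)
  qed
  define U where "U = (\<Inter>i\<in>{..<N}. (f^^i) -` (- cball p (2*\<beta>)))"
  have Uopen: "open U" unfolding U_def
    by (intro open_INT ballI open_vimage continuous_funpow[OF contf]) auto
  have qinU: "q \<in> U" using qU by (force simp: U_def)
  define \<epsilon> where "\<epsilon> = min (c/2) \<beta>"
  have \<epsilon>0: "\<epsilon> > 0" using c \<beta>0 by (simp add: \<epsilon>_def)
  obtain \<delta> where d: "\<delta> > 0" and sh: "\<forall>xs. pseudo_orbit f \<delta> xs \<longrightarrow> shadowed f \<epsilon> xs"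
    using assms(6) \<epsilon>0 unfolding shadowing_def by blast
  obtain \<eta> where \<eta>: "\<eta> > 0" and cont: "\<And>z. dist z p < \<eta> \<Longrightarrow> dist (f z) (f p) < \<delta>"
    using contf d unfolding continuous_on_iff by blast
  have "open (ball p \<eta>)" "ball p \<eta> \<noteq> {}" using \<eta> by auto
  then obtain kk where kk: "kk \<ge> 1" "(f ^^ kk) ` U \<inter> ball p \<eta> \<noteq> {}"
    using assms(5) Uopen qinU unfolding transitive_def by blast
  then obtain u where u: "u \<in> U" "(f^^kk) u \<in> ball p \<eta>" by blast
  define ii where "ii = kk mod N"
  define mm where "mm = kk div N"
  define s where "s = N * mm"
  define u' where "u' = (f^^ii) u"
  define z where "z = (f^^kk) u"
  have "kk = s + ii" unfolding s_def ii_def mm_def by (metis div_mult_mod_eq mult.commute)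
  then have zs: "z = (f^^s) u'" unfolding z_def u'_def by (metis comp_apply funpow_add)
  have gz: "(g^^s) z = u'" using zs funpow_inv[of g f s u', OF gf] by simp
  have far: "2*\<beta> < dist p u'"
  proof -
    have "ii < N" using N0 by (simp add: ii_def)
    then have "\<not> dist p ((f ^^ ii) u) \<le> 2 * \<beta>" using u(1) by (auto simp: U_def)
    then show ?thesis by (simp add: u'_def)
  qed
  have fz: "dist (f z) (f p) < \<delta>"
    using u(2) cont[of z] unfolding z_def by (simp add: dist_commute)
  define Qp where "Qp = N * (mm + 1)"
  have sQ: "s < Qp" using N0 by (simp add: s_def Qp_def)
  define P where "P j t = (if t \<le> - int (Suc j * Qp) then zpow f (t + int (Suc j * Qp)) z else zpow f t p)" for j t
  have ps: "pseudo_orbit f \<delta> (P j)" for j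
    unfolding pseudo_orbit_def
  proof
    fix t :: int
    define T where "T = int (Suc j * Qp)"
    have "Suc j * Qp > 0" using N0 by (simp add: Qp_def)
    then have T0: "T > 0" unfolding T_def by (metis of_nat_0_less_iff)
    have PT: "P j t' = (if t' \<le> - T then zpow f (t' + T) z else zpow f t' p)" for t'
      unfolding P_def T_def by (rule refl)
    show "dist (f (P j t)) (P j (t + 1)) < \<delta>"
    proof (cases "t + 1 \<le> - T")
      case True
      then have "t \<le> - T" by simp
      then show ?thesis using d True by (simp add: PT step algebra_simps)
    next
      case False
      show ?thesis
      proof (cases "t = - T")
        case True
        have "P j t = z" using True by (simp add: PT zpow_def)
        moreover have "P j (t+1) = f p"
        proof -
          have "P j (t+1) = zpow f (- T + 1) p" using True T0 by (simp add: PT)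
          also have "\<dots> = f (zpow f (- T) p)" using step by simp
          also have "zpow f (- T) p = p"
          proof -
            have "zpow f (- T) p = (g^^(Suc j * Qp)) p" unfolding T_def by (rule zneg)
            also have "Suc j * Qp = N * ((mm+1) * Suc j)" by (simp add: Qp_def algebra_simps)
            finally show ?thesis using pg by metis
          qed
          finally show ?thesis .
        qed
        ultimately show ?thesis using fz by simp
      next
        case False
        with \<open>\<not> t + 1 \<le> - T\<close> have "\<not> t \<le> - T" by simp
        then show ?thesis using d \<open>\<not> t + 1 \<le> - T\<close> by (simp add: PT step)
      qed
    qed
  qed
  have "\<forall>j. \<exists>y. \<forall>t. dist (zpow f t y) (P j t) < \<epsilon>"
    using ps sh unfolding shadowed_def by blast
  then obtain Y where Y: "\<And>j t. dist (zpow f t (Y j)) (P j t) < \<epsilon>" by metis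
  have Pnat: "P j (int m) = (f^^m) p" for j m
  proof -
    have "Suc j * Qp > 0" using N0 by (simp add: Qp_def)
    then have "- int (Suc j * Qp) < 0" by (metis neg_less_0_iff_less of_nat_0_less_iff)
    then have "\<not> int m \<le> - int (Suc j * Qp)" by linarith
    then show ?thesis by (simp add: P_def zpow_nat)
  qed
  have "Y j \<in> stable_set f c (Y 0)" for j
    unfolding stable_set_def
  proof (intro CollectI allI)
    fix m
    have "dist ((f^^m) (Y j)) ((f^^m) p) < \<epsilon>" using Y[where j=j and t="int m"] by (simp add: Pnat zpow_nat)
    moreover have "dist ((f^^m) (Y 0)) ((f^^m) p) < \<epsilon>" using Y[where j=0 and t="int m"] by (simp add: Pnat zpow_nat)
    ultimately show "dist ((f^^m) (Y j)) ((f^^m) (Y 0)) \<le> c"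
      using dist_triangle2[of "(f^^m) (Y j)" "(f^^m) (Y 0)" "(f^^m) p"] \<epsilon>_def by linarith
  qed
  then obtain i j where ij: "i < j" "Y i = Y j"
    using count_lemma[of "stable_set f c (Y 0)" n Y] stab by blast
  define t where "t = - int (Suc i * Qp + s)"
  have Pi: "P i t = u'"
  proof -
    have "P i t = zpow f (- int s) z" by (simp add: P_def t_def)
    then show ?thesis using zneg gz by simp
  qed
  have Pj: "P j t = p"
  proof -
    have "Suc (Suc i) \<le> Suc j" using ij(1) by simp
    then have "Suc (Suc i) * Qp \<le> Suc j * Qp" by (rule mult_le_mono1)
    then have "Suc i * Qp + Qp \<le> Suc j * Qp" by simp
    then have "Suc i * Qp + s < Suc j * Qp" using sQ by linarith
    then have h: "int (Suc i * Qp + s) < int (Suc j * Qp)" by (simp only: of_nat_less_iff)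
    have "\<not> t \<le> - int (Suc j * Qp)" unfolding t_def using h by linarith
    then have "P j t = zpow f t p" by (simp add: P_def)
    also have "\<dots> = (g^^(Suc i * Qp + s)) p" unfolding t_def by (rule zneg)
    also have "Suc i * Qp + s = N * ((mm+1) * Suc i + mm)" by (simp add: Qp_def s_def algebra_simps)
    finally show ?thesis using pg by metis
  qed
  have "dist (zpow f t (Y i)) u' < \<epsilon>" using Y[where j=i and t=t] Pi by simp
  moreover have "dist (zpow f t (Y i)) p < \<epsilon>" using Y[where j=j and t=t] Pj ij(2) by simp
  ultimately have "dist p u' < 2 * \<epsilon>"
    using dist_triangle2[of p u' "zpow f t (Y i)"] by (simp add: dist_commute)
  then show False using far \<epsilon>_def by linarith
qed

end
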